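(* Let $n\ge 5$ be odd and let $G$ be a connected oriented graph. The following are equivalent: (i) $G\to AC_n$; (ii) for every even integer $l$ with $4\le l\le n+1$, there is no semi-walk in $G$ following the same pattern as $Q_l$; (iii) $Q_{n+1}\not\to G$. Moreover, if $G$ has a vertex with both an in-neighbour and an out-neighbour, these are also equivalent to: (iv) with $(A_0,A_1,\dots,A_m,D_m,\dots,D_1)$ the $n$-cyclic cover of $G$ ($m=\frac{n-1}{2}$), the map $\varphi:V_G\to V_{AC_n}$ given by $\varphi(x)=a_i$ for $x\in A_i$ ($0\le i\le m$) and $\varphi(x)=a_{n-i}$ for $x\in D_i$ ($1\le i\le m$) is a homomorphism $G\to AC_n$.
   Context: An oriented graph is a digraph with no loops and no pair of opposite arcs. A homomorphism $G\to H$ is a vertex map sending arcs to arcs. A semi-walk in $D$ is a sequence $v_1a_1v_2\dots a_{k-1}v_k$ of (not necessarily distinct) vertices and arcs with $a_i$ having endpoints $v_i,v_{i+1}$; $a_i$ is forward if $a_i=(v_i,v_{i+1})$ and backward otherwise; its pattern is the word $l_1\dots l_{k-1}$ over $\{\to,\leftarrow\}$ with $l_i=\to$ iff $a_i$ is forward. The pattern of an oriented path $(p_0,\dots,p_k)$ is defined likewise. For $n\ge 3$, $Q_n$ is the oriented path $(q_0,\dots,q_{n-1})$ on $n$ vertices such that: the first two arcs $q_0q_1,q_1q_2$ are forward; the subpath $(q_1,\dots,q_{n-2})$ is alternating (consecutive arcs have opposite directions); and the last two arcs have the same direction. For $n\ge 3$, $AC_n$ is the oriented cycle with vertices $a_0,\dots,a_{n-1}$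 obtained from the path $(a_0,\dots,a_n)$ in which the arc between $a_i$ and $a_{i+1}$ is $a_i\to a_{i+1}$ if $i$ is even and $a_{i+1}\to a_i$ if $i$ is odd, by identifying $a_n$ with $a_0$. The $n$-cyclic cover (for odd $n\ge5$, $m=\frac{n-1}{2}$, and connected $G$ with a vertex having both in- and out-neighbours): $A_0=\{v: d^-(v)>0, d^+(v)>0\}$; $A_1$ = vertices of $V_G\setminus A_0$ with an in-neighbour in $A_0$; $D_1$ = vertices of $V_G\setminus A_0$ with an out-neighbour in $A_0$; $C_1=A_0\cup A_1\cup D_1$; for $i=2,\dots,m-1$, $D_i$ = vertices of $V_G\setminus C_{i-1}$ with a neighbour in $D_{i-1}$, $A_i$ = vertices of $V_G\setminus C_{i-1}$ with a neighbour in $A_{i-1}$, $C_i=C_{i-1}\cup A_i\cup D_i$; finally, if every vertex of $A_{m-1}$ has out-degree $0$ and every vertex of $D_{m-1}$ has in-degree $0$, $D_m$ = vertices of $V_G\setminus C_{m-1}$ with no out-neighbours and $A_m$ = vertices of $V_G\setminus C_{m-1}$ with no in-neighbours; otherwise $D_m$ = vertices of $V_G\setminus C_{m-1}$ with no in-neighbours and $A_m$ = vertices of $V_G\setminus C_{m-1}$ with no out-neighbours. The cover is $(A_0,A_1,\dots,A_m,D_m,\dots,D_1)$. *)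

theory Defs
  imports Main
begin

(* A digraph is given by a vertex set V and an arc set E \<subseteq> V \<times> V.
   Arcs are pairs (x,y) meaning x \<rightarrow> y. *)

definition oriented_graph :: "'a set \<Rightarrow> ('a \<times> 'a) set \<Rightarrow> bool" where
  "oriented_graph V E \<longleftrightarrow> E \<subseteq> V \<times> V \<and> (\<forall>x. (x, x) \<notin> E)
      \<and> (\<forall>x y. (x, y) \<in> E \<longrightarrow> (y, x) \<notin> E)"

definition connected_digraph :: "'a set \<Rightarrow> ('a \<times> 'a) set \<Rightarrow> bool" where
  "connected_digraph V E \<longleftrightarrow> V \<noteq> {} \<and> (\<forall>x\<in>V. \<forall>y\<in>V. (x, y) \<in> (E \<union> E\<inverse>)\<^sup>*)"

definition hom :: "'a set \<Rightarrow> ('a \<times> 'a) set \<Rightarrow> 'b set \<Rightarrow> ('b \<times> 'b) set \<Rightarrow> ('a \<Rightarrow> 'b) \<Rightarrow> bool" where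
  "hom V E W F f \<longleftrightarrow> (\<forall>x\<in>V. f x \<in> W) \<and> (\<forall>(x, y)\<in>E. (f x, f y) \<in> F)"

definition homomorphic :: "'a set \<Rightarrow> ('a \<times> 'a) set \<Rightarrow> 'b set \<Rightarrow> ('b \<times> 'b) set \<Rightarrow> bool" where
  "homomorphic V E W F \<longleftrightarrow> (\<exists>f. hom V E W F f)"

(* Patterns: words over {\<rightarrow>,\<leftarrow>}, encoded as bool lists, True = forward arc \<rightarrow>. *)

definition semiwalk_with_pattern :: "'a set \<Rightarrow> ('a \<times> 'a) set \<Rightarrow> (nat \<Rightarrow> 'a) \<Rightarrow> bool list \<Rightarrow> bool" where
  "semiwalk_with_pattern V E v p \<longleftrightarrow> (\<forall>i\<le>length p. v i \<in> V) \<and>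
     (\<forall>i<length p. if p ! i then (v i, v (Suc i)) \<in> E else (v (Suc i), v i) \<in> E)"

(* Direction of the i-th arc (between q_i and q_(i+1)) of Q_n, n \<ge> 3:
   arcs 0 and 1 forward; arcs 1..n-3 (those of the subpath q_1..q_(n-2)) alternate;
   the last arc n-2 has the same direction as arc n-3. *)
definition Q_dir :: "nat \<Rightarrow> nat \<Rightarrow> bool" where
  "Q_dir n i = (if i \<le> 1 then True else if i \<le> n - 3 then odd i else odd (n - 3))"

definition Q_pattern :: "nat \<Rightarrow> bool list" where
  "Q_pattern n = map (Q_dir n) [0..<n - 1]"

definition Q_verts :: "nat \<Rightarrow> nat set" where
  "Q_verts n = {0..<n}"

definition Q_arcs :: "nat \<Rightarrow> (nat \<times> nat) set" where
  "Q_arcs n = {(i, Suc i) | i. Suc i < n \<and> Q_dir n i} \<union> {(Suc i, i) | i. Suc i < n \<and> \<not> Q_dir n i}"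

definition AC_verts :: "nat \<Rightarrow> nat set" where
  "AC_verts n = {0..<n}"

definition AC_arcs :: "nat \<Rightarrow> (nat \<times> nat) set" where
  "AC_arcs n = {(i, Suc i mod n) | i. i < n \<and> even i} \<union> {(Suc i mod n, i) | i. i < n \<and> odd i}"

definition cc_A0 :: "'a set \<Rightarrow> ('a \<times> 'a) set \<Rightarrow> 'a set" where
  "cc_A0 V E = {x\<in>V. (\<exists>u. (u, x) \<in> E) \<and> (\<exists>w. (x, w) \<in> E)}"

(* cc_layers V E i = (A_i, D_i, C_i) for 1 \<le> i (D_0 := {}, C_0 := A_0) *)
fun cc_layers :: "'a set \<Rightarrow> ('a \<times> 'a) set \<Rightarrow> nat \<Rightarrow> 'a set \<times> 'a set \<times> 'a set" where
  "cc_layers V E 0 = (cc_A0 V E, {}, cc_A0 V E)"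
| "cc_layers V E (Suc 0) =
     (let A0 = cc_A0 V E;
          A1 = {x \<in> V - A0. \<exists>y\<in>A0. (y, x) \<in> E};
          D1 = {x \<in> V - A0. \<exists>y\<in>A0. (x, y) \<in> E}
      in (A1, D1, A0 \<union> A1 \<union> D1))"
| "cc_layers V E (Suc (Suc i)) =
     (case cc_layers V E (Suc i) of (Ai, Di, Ci) \<Rightarrow>
        (let Di' = {x \<in> V - Ci. \<exists>y\<in>Di. (x, y) \<in> E \<or> (y, x) \<in> E};
             Ai' = {x \<in> V - Ci. \<exists>y\<in>Ai. (x, y) \<in> E \<or> (y, x) \<in> E}
         in (Ai', Di', Ci \<union> Ai' \<union> Di')))"

(* the last layer (A_m, D_m), m = (n-1)/2 *)
definition cc_last :: "'a set \<Rightarrow> ('a \<times> 'a) set \<Rightarrow> nat \<Rightarrow> 'a set \<times> 'a set" where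
  "cc_last V E n =
     (case cc_layers V E ((n - 1) div 2 - 1) of (Am1, Dm1, Cm1) \<Rightarrow>
        if (\<forall>x\<in>Am1. \<not> (\<exists>y. (x, y) \<in> E)) \<and> (\<forall>x\<in>Dm1. \<not> (\<exists>y. (y, x) \<in> E))
        then ({x \<in> V - Cm1. \<not> (\<exists>y. (y, x) \<in> E)}, {x \<in> V - Cm1. \<not> (\<exists>y. (x, y) \<in> E)})
        else ({x \<in> V - Cm1. \<not> (\<exists>y. (x, y) \<in> E)}, {x \<in> V - Cm1. \<not> (\<exists>y. (y, x) \<in> E)}))"

definition cc_A :: "'a set \<Rightarrow> ('a \<times> 'a) set \<Rightarrow> nat \<Rightarrow> nat \<Rightarrow> 'a set" where
  "cc_A V E n i = (if i < (n - 1) div 2 then fst (cc_layers V E i)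
                   else if i = (n - 1) div 2 then fst (cc_last V E n) else {})"

definition cc_D :: "'a set \<Rightarrow> ('a \<times> 'a) set \<Rightarrow> nat \<Rightarrow> nat \<Rightarrow> 'a set" where
  "cc_D V E n i = (if 1 \<le> i \<and> i < (n - 1) div 2 then fst (snd (cc_layers V E i))
                   else if i = (n - 1) div 2 then snd (cc_last V E n) else {})"

definition cc_class :: "'a set \<Rightarrow> ('a \<times> 'a) set \<Rightarrow> nat \<Rightarrow> nat \<Rightarrow> 'a set" where
  "cc_class V E n k = (if k \<le> (n - 1) div 2 then cc_A V E n k
                       else if k < n then cc_D V E n (n - k) else {})"

definition cc_map :: "'a set \<Rightarrow> ('a \<times> 'a) set \<Rightarrow> nat \<Rightarrow> 'a \<Rightarrow> nat" where
  "cc_map V E n x = (THE k. k < n \<and> x \<in> cc_class V E n k)"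

end

theory Submission
  imports Defs
begin


lemma Q_pattern_len[simp]: "length (Q_pattern l) = l - 1"
  by (simp add: Q_pattern_def)

lemma Q_pattern_nth[simp]: "i < l - 1 \<Longrightarrow> Q_pattern l ! i = Q_dir l i"
  by (simp add: Q_pattern_def)

definition sw :: "'a set \<Rightarrow> ('a \<times> 'a) set \<Rightarrow> (nat \<Rightarrow> 'a) \<Rightarrow> nat \<Rightarrow> (nat \<Rightarrow> bool) \<Rightarrow> bool" where
  "sw V E v L P \<longleftrightarrow> (\<forall>i\<le>L. v i \<in> V) \<and>
     (\<forall>i<L. if P i then (v i, v (Suc i)) \<in> E else (v (Suc i), v i) \<in> E)"

lemma semiwalk_sw: "semiwalk_with_pattern V E v (Q_pattern l) \<longleftrightarrow> sw V E v (l - 1) (Q_dir l)"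
  by (simp add: semiwalk_with_pattern_def sw_def)

lemma Q_dir_alt: "4 \<le> l \<Longrightarrow> Q_dir l p = (p \<le> 1 \<or> (p \<le> l - 3 \<and> odd p) \<or> (l - 3 < p \<and> odd (l - 3)))"
  by (auto simp: Q_dir_def)

lemma pad:
  assumes "sw V E v (l - 1) (Q_dir l)" "4 \<le> l"
  shows "sw V E (\<lambda>p. if p \<le> 2 then v p else v (p - 2)) (l + 1) (Q_dir (l + 2))"
proof -
  have V: "\<And>i. i \<le> l - 1 \<Longrightarrow> v i \<in> V" and A: "\<And>i. i < l - 1 \<Longrightarrow> (if Q_dir l i then (v i, v (Suc i)) \<in> E else (v (Suc i), v i) \<in> E)"
    using assms(1) unfolding sw_def by auto
  have a1: "(v 1, v 2) \<in> E" using A[of 1] assms(2) by (simp add: Q_dir_def numeral_2_eq_2)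
  show ?thesis unfolding sw_def
  proof (intro conjI allI impI)
    fix i assume "i \<le> l + 1" then show "(if i \<le> 2 then v i else v (i - 2)) \<in> V"
      using V assms(2) by auto
  next
    fix i assume i: "i < l + 1"
    consider "i < 2" | "i = 2" | "i = 3" | "i \<ge> 4" by linarith
    then show "if Q_dir (l + 2) i then ((if i \<le> 2 then v i else v (i - 2)), (if Suc i \<le> 2 then v (Suc i) else v (Suc i - 2))) \<in> E
        else ((if Suc i \<le> 2 then v (Suc i) else v (Suc i - 2)), (if i \<le> 2 then v i else v (i - 2))) \<in> E"
    proof cases
      case 1 then show ?thesis using A[of i] assms(2) by (auto simp: Q_dir_def)
    next
      case 2 then show ?thesis using a1 assms(2) by (auto simp: Q_dir_def)
    next
      case 3
      have "Q_dir (l + 2) 3" using assms(2) by (simp add: Q_dir_def)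
      then show ?thesis using a1 3 by (simp add: numeral_3_eq_3 numeral_2_eq_2)
    next
      case 4
      have e: "Q_dir (l + 2) i = Q_dir l (i - 2)" using 4 i assms(2) by (auto simp: Q_dir_def)
      have "Suc i - 2 = Suc (i - 2)" using 4 by auto
      then show ?thesis using A[of "i - 2"] 4 i e by auto
    qed
  qed
qed

lemma pad_many:
  assumes "sw V E v (l - 1) (Q_dir l)" "4 \<le> l"
  shows "\<exists>w. sw V E w (l + 2 * t - 1) (Q_dir (l + 2 * t))"
proof (induction t)
  case 0 then show ?case using assms by auto
next
  case (Suc t)
  then obtain w where "sw V E w (l + 2 * t - 1) (Q_dir (l + 2 * t))" by auto
  have e1: "l + 2 * t - 1 + 2 = l + 2 * Suc t - 1" "l + 2 * t + 2 = l + 2 * Suc t"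
    using assms(2) by auto
  have "4 \<le> l + 2 * t" using assms(2) by auto
  from pad[OF _ this] \<open>sw V E w (l + 2 * t - 1) (Q_dir (l + 2 * t))\<close>
  have "sw V E (\<lambda>p. if p \<le> 2 then w p else w (p - 2)) (l + 2 * t + 1) (Q_dir (l + 2 * t + 2))" by blast
  moreover have "l + 2 * t + 1 = l + 2 * Suc t - 1" using assms(2) by auto
  ultimately show ?case by (metis e1(2))
qed

lemma hom_Q_sw: "hom (Q_verts L) (Q_arcs L) V E g \<longleftrightarrow> sw V E g (L - 1) (Q_dir L)" if "L \<ge> 1"
proof
  assume h: "hom (Q_verts L) (Q_arcs L) V E g"
  show "sw V E g (L - 1) (Q_dir L)" unfolding sw_def
  proof (intro conjI allI impI)
    fix i assume "i \<le> L - 1" then show "g i \<in> V" using h that by (auto simp: hom_def Q_verts_def)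
  next
    fix i assume "i < L - 1"
    then show "if Q_dir L i then (g i, g (Suc i)) \<in> E else (g (Suc i), g i) \<in> E"
      using h unfolding hom_def Q_arcs_def by auto
  qed
next
  assume s: "sw V E g (L - 1) (Q_dir L)"
  show "hom (Q_verts L) (Q_arcs L) V E g" unfolding hom_def
  proof (intro conjI ballI)
    fix x assume "x \<in> Q_verts L" then show "g x \<in> V" using s by (auto simp: sw_def Q_verts_def)
  next
    fix a assume "a \<in> Q_arcs L"
    then obtain i where "a = (i, Suc i) \<and> Suc i < L \<and> Q_dir L i \<or> a = (Suc i, i) \<and> Suc i < L \<and> \<not> Q_dir L i"
      unfolding Q_arcs_def by blast
    moreover have "\<And>i. Suc i < L \<Longrightarrow> i < L - 1" by auto
    ultimately show "case a of (x, y) \<Rightarrow> (g x, g y) \<in> E"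
      using s unfolding sw_def by (metis (no_types, lifting) case_prod_conv)
  qed
qed



lemma AC_arc_iff:
  assumes "odd n"
  shows "(a, b) \<in> AC_arcs n \<longleftrightarrow> a < n \<and> b < n \<and>
     ((even a \<and> Suc a < n \<and> b = Suc a) \<or> (a = n - 1 \<and> b = 0) \<or> (odd b \<and> Suc b < n \<and> a = Suc b))"
proof
  assume "(a, b) \<in> AC_arcs n"
  then obtain i where "(a = i \<and> b = Suc i mod n \<and> i < n \<and> even i) \<or> (a = Suc i mod n \<and> b = i \<and> i < n \<and> odd i)"
    unfolding AC_arcs_def by blast
  then show "a < n \<and> b < n \<and> ((even a \<and> Suc a < n \<and> b = Suc a) \<or> (a = n - 1 \<and> b = 0) \<or> (odd b \<and> Suc b < n \<and> a = Suc b))"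
  proof
    assume h: "a = i \<and> b = Suc i mod n \<and> i < n \<and> even i"
    show ?thesis
    proof (cases "Suc i < n")
      case True then show ?thesis using h by auto
    next
      case False then have "Suc i = n" using h by auto
      then show ?thesis using h by auto
    qed
  next
    assume h: "a = Suc i mod n \<and> b = i \<and> i < n \<and> odd i"
    have "Suc i \<noteq> n" using h assms by auto
    then have "Suc i < n" using h by auto
    then show ?thesis using h by auto
  qed
next
  assume h: "a < n \<and> b < n \<and> ((even a \<and> Suc a < n \<and> b = Suc a) \<or> (a = n - 1 \<and> b = 0) \<or> (odd b \<and> Suc b < n \<and> a = Suc b))"
  have n0: "n > 0" using assms by (cases n) auto
  show "(a, b) \<in> AC_arcs n"
  proof -
    consider "even a \<and> Suc a < n \<and> b = Suc a" | "a = n - 1 \<and> b = 0" | "odd b \<and> Suc b < n \<and> a = Suc b" using h by blast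
    then show ?thesis
    proof cases
      case 1 then show ?thesis unfolding AC_arcs_def by auto
    next
      case 2
      have "even (n - 1)" using assms n0 by simp
      moreover have "Suc (n - 1) mod n = 0" using n0 by simp
      ultimately show ?thesis using 2 n0 unfolding AC_arcs_def by force
    next
      case 3 then show ?thesis unfolding AC_arcs_def by auto
    qed
  qed
qed

lemma AC_src_even:
  assumes "odd n" "(a, b) \<in> AC_arcs n"
  shows "even a"
proof -
  have n0: "n > 0" using assms(1) by (cases n) auto
  have e: "even (n - 1)" using assms(1) n0 by simp
  have "(even a \<and> Suc a < n \<and> b = Suc a) \<or> (a = n - 1 \<and> b = 0) \<or> (odd b \<and> Suc b < n \<and> a = Suc b)"
    using assms(2) unfolding AC_arc_iff[OF assms(1)] by auto
  then show ?thesis using e by auto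
qed

lemma AC_tgt:
  assumes "odd n" "(a, b) \<in> AC_arcs n"
  shows "odd b \<or> b = 0"
proof -
  have "(even a \<and> Suc a < n \<and> b = Suc a) \<or> (a = n - 1 \<and> b = 0) \<or> (odd b \<and> Suc b < n \<and> a = Suc b)"
    using assms(2) unfolding AC_arc_iff[OF assms(1)] by auto
  then show ?thesis by auto
qed

lemma AC_cases:
  assumes "odd n" "(a, b) \<in> AC_arcs n"
  shows "a < n \<and> b < n \<and> ((even a \<and> Suc a < n \<and> b = Suc a) \<or> (a = n - 1 \<and> b = 0) \<or> (odd b \<and> Suc b < n \<and> a = Suc b))"
  using assms AC_arc_iff by blast

lemma AC_two:
  assumes "odd n" "(a, b) \<in> AC_arcs n" "(b, c) \<in> AC_arcs n" "3 \<le> n"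
  shows "b = 0 \<and> a = n - 1 \<and> c = 1"
proof -
  have b0: "b = 0" using AC_src_even[OF assms(1,3)] AC_tgt[OF assms(1,2)] by auto
  have "(even a \<and> Suc a < n \<and> b = Suc a) \<or> (a = n - 1 \<and> b = 0) \<or> (odd b \<and> Suc b < n \<and> a = Suc b)"
    using assms(2) unfolding AC_arc_iff[OF assms(1)] by auto
  then have "a = n - 1" using b0 by auto
  moreover have "(even b \<and> Suc b < n \<and> c = Suc b) \<or> (b = n - 1 \<and> c = 0) \<or> (odd c \<and> Suc c < n \<and> b = Suc c)"
    using assms(3) unfolding AC_arc_iff[OF assms(1)] by auto
  then have "c = 1" using b0 assms(4) by auto
  ultimately show ?thesis using b0 by auto
qed

lemma AC_no_Q:
  assumes n: "odd n" "5 \<le> n" and l: "even l" "4 \<le> l" "l \<le> n + 1"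
    and w: "\<And>i. i < l - 1 \<Longrightarrow> (if Q_dir l i then (w i, w (Suc i)) \<in> AC_arcs n else (w (Suc i), w i) \<in> AC_arcs n)"
  shows False
proof -
  define k where "k = (l - 4) div 2"
  have k: "l = 2 * k + 4" using l unfolding k_def by (auto elim!: evenE)
  have kn: "2 * k + 3 \<le> n" using k l n by presburger
  have n3: "3 \<le> n" using n by auto
  have Qd: "\<And>p. Q_dir l p = (p \<le> 1 \<or> (p \<le> 2 * k + 1 \<and> odd p) \<or> 2 * k + 1 < p)"
    using k by (auto simp: Q_dir_def)
  have wf: "(w p, w (Suc p)) \<in> AC_arcs n" if "p \<le> 1 \<or> (p \<le> 2 * k + 1 \<and> odd p) \<or> 2 * k + 1 < p" "p < 2 * k + 3" for p
    using w[of p] that Qd[of p] k by simp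
  have wb: "(w (Suc p), w p) \<in> AC_arcs n" if "2 \<le> p" "p \<le> 2 * k + 1" "even p" for p
    using w[of p] that Qd[of p] k by simp
  have a0: "(w 0, w 1) \<in> AC_arcs n" using wf[of 0] by simp
  have a1: "(w 1, w 2) \<in> AC_arcs n" using wf[of 1] by (simp add: eval_nat_numeral)
  from AC_two[OF n(1) a0 a1 n3] have w1: "w 1 = 0" "w 2 = 1" by auto
  show False
  proof (cases "k = 0")
    case True
    have "(w 2, w 3) \<in> AC_arcs n" using wf[of 2] True by (simp add: eval_nat_numeral)
    from AC_two[OF n(1) a1 this n3] w1 show False by auto
  next
    case False
    have inv: "odd (w (2 * j + 2)) \<and> w (2 * j + 2) \<le> 2 * j + 1" if "j \<le> k - 1" for j
      using that
    proof (induction j)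
      case 0 then show ?case using w1 by (simp add: eval_nat_numeral)
    next
      case (Suc j)
      then have IH: "odd (w (2 * j + 2)) \<and> w (2 * j + 2) \<le> 2 * j + 1" by auto
      have jk: "2 * j + 4 \<le> 2 * k" using Suc.prems False by auto
      have e1: "(w (Suc (2 * j + 2)), w (2 * j + 2)) \<in> AC_arcs n"
        by (rule wb) (use jk in auto)
      have c1: "(even (w (Suc (2 * j + 2))) \<and> Suc (w (Suc (2 * j + 2))) < n \<and> w (2 * j + 2) = Suc (w (Suc (2 * j + 2)))) \<or> (w (Suc (2 * j + 2)) = n - 1 \<and> w (2 * j + 2) = 0)
          \<or> (odd (w (2 * j + 2)) \<and> Suc (w (2 * j + 2)) < n \<and> w (Suc (2 * j + 2)) = Suc (w (2 * j + 2)))"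
        using AC_cases[OF n(1) e1] by blast
      have x1: "w (Suc (2 * j + 2)) \<le> 2 * j + 2" using c1 IH by auto
      have x2: "even (w (Suc (2 * j + 2)))" using AC_src_even[OF n(1) e1] .
      have e2: "(w (Suc (2 * j + 2)), w (Suc (Suc (2 * j + 2)))) \<in> AC_arcs n"
        by (rule wf) (use jk in auto)
      have c2: "(even (w (Suc (2 * j + 2))) \<and> Suc (w (Suc (2 * j + 2))) < n \<and> w (Suc (Suc (2 * j + 2))) = Suc (w (Suc (2 * j + 2)))) \<or> (w (Suc (2 * j + 2)) = n - 1 \<and> w (Suc (Suc (2 * j + 2))) = 0)
          \<or> (odd (w (Suc (Suc (2 * j + 2)))) \<and> Suc (w (Suc (Suc (2 * j + 2)))) < n \<and> w (Suc (2 * j + 2)) = Suc (w (Suc (Suc (2 * j + 2)))))"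
        using AC_cases[OF n(1) e2] by blast
      have "w (Suc (2 * j + 2)) \<noteq> n - 1" using x1 jk kn by auto
      then have "odd (w (Suc (Suc (2 * j + 2)))) \<and> w (Suc (Suc (2 * j + 2))) \<le> 2 * j + 3" using c2 x1 x2 by auto
      moreover have "Suc (Suc (2 * j + 2)) = 2 * Suc j + 2" by simp
      ultimately show ?case by simp
    qed
    have kk: "2 * (k - 1) + 2 = 2 * k" "2 * (k - 1) + 1 = 2 * k - 1" using False by auto
    from inv[of "k - 1"] kk have I: "odd (w (2 * k)) \<and> w (2 * k) \<le> 2 * k - 1" by simp
    have e: "(w (Suc (2 * k)), w (2 * k)) \<in> AC_arcs n"
      by (rule wb) (use False in auto)
    have c: "(even (w (Suc (2 * k))) \<and> Suc (w (Suc (2 * k))) < n \<and> w (2 * k) = Suc (w (Suc (2 * k)))) \<or> (w (Suc (2 * k)) = n - 1 \<and> w (2 * k) = 0)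
          \<or> (odd (w (2 * k)) \<and> Suc (w (2 * k)) < n \<and> w (Suc (2 * k)) = Suc (w (2 * k)))"
      using AC_cases[OF n(1) e] by blast
    have x: "w (Suc (2 * k)) \<le> 2 * k" using c I False by auto
    have b1: "(w (Suc (2 * k)), w (Suc (Suc (2 * k)))) \<in> AC_arcs n" by (rule wf) auto
    have b2: "(w (Suc (Suc (2 * k))), w (Suc (Suc (Suc (2 * k))))) \<in> AC_arcs n" by (rule wf) auto
    from AC_two[OF n(1) b1 b2 n3] have "w (Suc (2 * k)) = n - 1" by auto
    then show False using x kn by auto
  qed
qed



locale og =
  fixes V :: "'a set" and E :: "('a \<times> 'a) set"
  assumes og: "oriented_graph V E"
begin

abbreviation "A0 \<equiv> cc_A0 V E"
abbreviation "LA i \<equiv> fst (cc_layers V E i)"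
abbreviation "LD i \<equiv> fst (snd (cc_layers V E i))"
abbreviation "LC i \<equiv> snd (snd (cc_layers V E i))"

lemma EV: "(x, y) \<in> E \<Longrightarrow> x \<in> V \<and> y \<in> V"
  using og unfolding oriented_graph_def by auto

lemma notA0: "x \<notin> A0 \<Longrightarrow> (u, x) \<in> E \<Longrightarrow> (x, w) \<notin> E"
  using EV unfolding cc_A0_def by blast

lemma A0D: "x \<in> A0 \<Longrightarrow> x \<in> V \<and> (\<exists>u. (u, x) \<in> E) \<and> (\<exists>w. (x, w) \<in> E)"
  unfolding cc_A0_def by blast

lemma layer0[simp]: "LA 0 = A0" "LD 0 = {}" "LC 0 = A0" by simp_all

lemma layer1: "LA (Suc 0) = {x \<in> V - A0. \<exists>y\<in>A0. (y, x) \<in> E}" "LD (Suc 0) = {x \<in> V - A0. \<exists>y\<in>A0. (x, y) \<in> E}"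
  "LC (Suc 0) = A0 \<union> LA (Suc 0) \<union> LD (Suc 0)"
  by (simp_all add: Let_def)

declare cc_layers.simps[simp del]

lemma layerSS: "LA (Suc (Suc i)) = {x \<in> V - LC (Suc i). \<exists>y\<in>LA (Suc i). (x, y) \<in> E \<or> (y, x) \<in> E}"
  "LD (Suc (Suc i)) = {x \<in> V - LC (Suc i). \<exists>y\<in>LD (Suc i). (x, y) \<in> E \<or> (y, x) \<in> E}"
  "LC (Suc (Suc i)) = LC (Suc i) \<union> LA (Suc (Suc i)) \<union> LD (Suc (Suc i))"
  by (cases "cc_layers V E (Suc i)"; simp add: Let_def cc_layers.simps)+

lemma LC_Suc: "LC (Suc i) = LC i \<union> LA (Suc i) \<union> LD (Suc i)"
  by (cases i) (simp_all only: layer1 layerSS layer0)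

lemma LC_mono: "i \<le> j \<Longrightarrow> LC i \<subseteq> LC j"
  by (induction j rule: dec_induct) (auto simp: LC_Suc)

lemma LAD_new: "LA (Suc i) \<subseteq> V - LC i" "LD (Suc i) \<subseteq> V - LC i"
  by (cases i; auto simp: layer1 layerSS)+

lemma A0V: "A0 \<subseteq> V" unfolding cc_A0_def by auto

lemma LC_V: "LC i \<subseteq> V"
proof (induction i)
  case 0 then show ?case using A0V by simp
next
  case (Suc i) then show ?case using LAD_new[of i] by (auto simp: LC_Suc)
qed

lemma LAD_notA0: "x \<in> LA (Suc i) \<or> x \<in> LD (Suc i) \<Longrightarrow> x \<notin> A0"
  using LAD_new[of i] LC_mono[of 0 i] by auto

lemma types:
  "(x \<in> LA (Suc i) \<longrightarrow> (even i \<longrightarrow> (\<exists>u. (u, x) \<in> E)) \<and> (odd i \<longrightarrow> (\<exists>w. (x, w) \<in> E))) \<and>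
   (x \<in> LD (Suc i) \<longrightarrow> (even i \<longrightarrow> (\<exists>w. (x, w) \<in> E)) \<and> (odd i \<longrightarrow> (\<exists>u. (u, x) \<in> E)))"
proof (induction i arbitrary: x)
  case 0 then show ?case by (auto simp: layer1)
next
  case (Suc i)
  show ?case
  proof (intro conjI impI)
    assume x: "x \<in> LA (Suc (Suc i))"
    then obtain y where y: "y \<in> LA (Suc i)" "(x, y) \<in> E \<or> (y, x) \<in> E" by (auto simp: layerSS)
    have yA: "y \<notin> A0" using LAD_notA0 y by blast
    { assume "even (Suc i)"
      then have "odd i" by simp
      then obtain w where "(y, w) \<in> E" using Suc.IH y by blast
      then have "(x, y) \<notin> E" using notA0[OF yA] by blast
      then show "\<exists>u. (u, x) \<in> E" using y by blast }
    { assume "odd (Suc i)"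
      then have "even i" by simp
      then obtain u where "(u, y) \<in> E" using Suc.IH y by blast
      then have "(y, x) \<notin> E" using notA0[OF yA] by blast
      then show "\<exists>w. (x, w) \<in> E" using y by blast }
  next
    assume x: "x \<in> LD (Suc (Suc i))"
    then obtain y where y: "y \<in> LD (Suc i)" "(x, y) \<in> E \<or> (y, x) \<in> E" by (auto simp: layerSS)
    have yA: "y \<notin> A0" using LAD_notA0 y by blast
    { assume "even (Suc i)"
      then have "odd i" by simp
      then obtain u where "(u, y) \<in> E" using Suc.IH y by blast
      then have "(y, x) \<notin> E" using notA0[OF yA] by blast
      then show "\<exists>w. (x, w) \<in> E" using y by blast }
    { assume "odd (Suc i)"
      then have "even i" by simp
      then obtain w where "(y, w) \<in> E" using Suc.IH y by blast
      then have "(x, y) \<notin> E" using notA0[OF yA] by blast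
      then show "\<exists>u. (u, x) \<in> E" using y by blast }
  qed
qed

lemma LA_in: "x \<in> LA (Suc i) \<Longrightarrow> even i \<Longrightarrow> (\<exists>u. (u, x) \<in> E)" using types by blast
lemma LA_out: "x \<in> LA (Suc i) \<Longrightarrow> odd i \<Longrightarrow> (\<exists>w. (x, w) \<in> E)" using types by blast
lemma LD_out: "x \<in> LD (Suc i) \<Longrightarrow> even i \<Longrightarrow> (\<exists>w. (x, w) \<in> E)" using types by blast
lemma LD_in: "x \<in> LD (Suc i) \<Longrightarrow> odd i \<Longrightarrow> (\<exists>u. (u, x) \<in> E)" using types by blast

lemma LA_noout: "x \<in> LA (Suc i) \<Longrightarrow> even i \<Longrightarrow> (x, w) \<notin> E"
  using LA_in LAD_notA0 notA0 by blast
lemma LA_noin: "x \<in> LA (Suc i) \<Longrightarrow> odd i \<Longrightarrow> (u, x) \<notin> E"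
  using LA_out LAD_notA0 notA0 by blast
lemma LD_noin: "x \<in> LD (Suc i) \<Longrightarrow> even i \<Longrightarrow> (u, x) \<notin> E"
  using LD_out LAD_notA0 notA0 by blast
lemma LD_noout: "x \<in> LD (Suc i) \<Longrightarrow> odd i \<Longrightarrow> (x, w) \<notin> E"
  using LD_in LAD_notA0 notA0 by blast

lemma LC_cases: "x \<in> LC i \<Longrightarrow> x \<in> A0 \<or> (\<exists>t. t < i \<and> (x \<in> LA (Suc t) \<or> x \<in> LD (Suc t)))"
proof (induction i)
  case 0 then show ?case by simp
next
  case (Suc i) then show ?case unfolding LC_Suc by (auto intro: less_SucI)
qed

lemma level_lb: "x \<in> LA (Suc t) \<or> x \<in> LD (Suc t) \<Longrightarrow> x \<in> LC j \<Longrightarrow> t < j"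
proof (rule ccontr)
  assume "x \<in> LA (Suc t) \<or> x \<in> LD (Suc t)" "x \<in> LC j" "\<not> t < j"
  then have "j \<le> t" by linarith
  then have "LC j \<subseteq> LC t" by (rule LC_mono)
  then have "x \<in> LC t" using \<open>x \<in> LC j\<close> by blast
  then show False using LAD_new[of t] \<open>x \<in> LA (Suc t) \<or> x \<in> LD (Suc t)\<close> by blast
qed

lemma LAD_LC: "x \<in> LA (Suc t) \<or> x \<in> LD (Suc t) \<Longrightarrow> x \<in> LC (Suc t)"
  by (auto simp: LC_Suc)

lemma bfs: "x \<in> LA (Suc t) \<or> x \<in> LD (Suc t) \<Longrightarrow> (x, y) \<in> E \<or> (y, x) \<in> E \<Longrightarrow> y \<in> LC (Suc (Suc t))"
  using EV by (auto simp: layerSS)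

lemma bfs0_out: "x \<in> A0 \<Longrightarrow> (x, y) \<in> E \<Longrightarrow> y \<notin> A0 \<Longrightarrow> y \<in> LA (Suc 0)"
  using EV by (auto simp: layer1)
lemma bfs0_in: "x \<in> A0 \<Longrightarrow> (y, x) \<in> E \<Longrightarrow> y \<notin> A0 \<Longrightarrow> y \<in> LD (Suc 0)"
  using EV by (auto simp: layer1)

definition chainw :: "('a \<times> 'a) set \<Rightarrow> (nat \<Rightarrow> 'a) \<Rightarrow> nat \<Rightarrow> bool" where
  "chainw F w k \<longleftrightarrow> (\<forall>p<k. if p \<le> 1 \<or> odd p then (w p, w (Suc p)) \<in> F else (w (Suc p), w p) \<in> F)"

lemma chainA: "x \<in> LA (Suc i) \<Longrightarrow> \<exists>w. chainw E w (Suc (Suc i)) \<and> w (Suc (Suc i)) = x"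
proof (induction i arbitrary: x)
  case 0
  then obtain z where z: "z \<in> A0" "(z, x) \<in> E" by (auto simp: layer1)
  then obtain u where u: "(u, z) \<in> E" using A0D by blast
  let ?w = "\<lambda>p. if p = 0 then u else if p = 1 then z else x"
  have "chainw E ?w 2" unfolding chainw_def using u z by (auto simp: less_2_cases_iff)
  then show ?case by (intro exI[of _ ?w]) (auto simp: numeral_2_eq_2)
next
  case (Suc i)
  then obtain y where y: "y \<in> LA (Suc i)" "(x, y) \<in> E \<or> (y, x) \<in> E" by (auto simp: layerSS)
  from Suc.IH[OF y(1)] obtain w where w: "chainw E w (Suc (Suc i))" "w (Suc (Suc i)) = y" by blast
  let ?w = "w(Suc (Suc (Suc i)) := x)"
  have d: "if Suc (Suc i) \<le> 1 \<or> odd (Suc (Suc i)) then (y, x) \<in> E else (x, y) \<in> E"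
  proof (cases "even i")
    case True then show ?thesis using LA_noout[OF y(1)] y(2) by auto
  next
    case False then show ?thesis using LA_noin[OF y(1)] y(2) by auto
  qed
  have "chainw E ?w (Suc (Suc (Suc i)))" unfolding chainw_def
  proof (intro allI impI)
    fix p assume p: "p < Suc (Suc (Suc i))"
    show "if p \<le> 1 \<or> odd p then (?w p, ?w (Suc p)) \<in> E else (?w (Suc p), ?w p) \<in> E"
    proof (cases "p = Suc (Suc i)")
      case True then show ?thesis using d w(2) by simp
    next
      case False then have "p < Suc (Suc i)" using p by simp
      then show ?thesis using w(1) unfolding chainw_def by auto
    qed
  qed
  then show ?case by (metis fun_upd_same)
qed

lemma chainD: "x \<in> LD (Suc i) \<Longrightarrow> \<exists>w. chainw (E\<inverse>) w (Suc (Suc i)) \<and> w (Suc (Suc i)) = x"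
proof (induction i arbitrary: x)
  case 0
  then obtain z where z: "z \<in> A0" "(x, z) \<in> E" by (auto simp: layer1)
  then obtain u where u: "(z, u) \<in> E" using A0D by blast
  let ?w = "\<lambda>p. if p = 0 then u else if p = 1 then z else x"
  have "chainw (E\<inverse>) ?w 2" unfolding chainw_def using u z by (auto simp: less_2_cases_iff)
  then show ?case by (intro exI[of _ ?w]) (auto simp: numeral_2_eq_2)
next
  case (Suc i)
  then obtain y where y: "y \<in> LD (Suc i)" "(x, y) \<in> E \<or> (y, x) \<in> E" by (auto simp: layerSS)
  from Suc.IH[OF y(1)] obtain w where w: "chainw (E\<inverse>) w (Suc (Suc i))" "w (Suc (Suc i)) = y" by blast
  let ?w = "w(Suc (Suc (Suc i)) := x)"
  have d: "if Suc (Suc i) \<le> 1 \<or> odd (Suc (Suc i)) then (x, y) \<in> E else (y, x) \<in> E"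
  proof (cases "even i")
    case True then show ?thesis using LD_noin[OF y(1)] y(2) by auto
  next
    case False then show ?thesis using LD_noout[OF y(1)] y(2) by auto
  qed
  have "chainw (E\<inverse>) ?w (Suc (Suc (Suc i)))" unfolding chainw_def
  proof (intro allI impI)
    fix p assume p: "p < Suc (Suc (Suc i))"
    show "if p \<le> 1 \<or> odd p then (?w p, ?w (Suc p)) \<in> E\<inverse> else (?w (Suc p), ?w p) \<in> E\<inverse>"
    proof (cases "p = Suc (Suc i)")
      case True then show ?thesis using d w(2) by simp
    next
      case False then have "p < Suc (Suc i)" using p by simp
      then show ?thesis using w(1) unfolding chainw_def by auto
    qed
  qed
  then show ?case by (metis fun_upd_same)
qed

end


context og begin

lemma sw_from_arcs:
  assumes "\<And>p. p < L \<Longrightarrow> (if P p then (W p, W (Suc p)) \<in> E else (W (Suc p), W p) \<in> E)" "L \<ge> 1"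
  shows "sw V E W L P"
  unfolding sw_def
proof (intro conjI allI impI)
  fix p assume p: "p \<le> L"
  show "W p \<in> V"
  proof (cases "p < L")
    case True then show ?thesis using assms(1)[of p] EV by (auto split: if_splits)
  next
    case False then have "p = Suc (L - 1)" using p assms(2) by auto
    then show ?thesis using assms(1)[of "L - 1"] EV assms(2) by (auto split: if_splits)
  qed
next
  fix p assume "p < L" then show "if P p then (W p, W (Suc p)) \<in> E else (W (Suc p), W p) \<in> E" using assms(1) by blast
qed

lemma AD_walk:
  assumes x: "x \<in> LA (Suc i)" and y: "y \<in> LD (Suc j)" and adj: "(x, y) \<in> E \<or> (y, x) \<in> E"
  shows "even (i + j) \<and> (\<exists>W. sw V E W (i + j + 5) (Q_dir (i + j + 6)))"
proof -
  have par: "even (i + j)"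
  proof (rule ccontr)
    assume "odd (i + j)"
    then have "(even i \<and> odd j) \<or> (odd i \<and> even j)" by auto
    then show False
    proof
      assume "even i \<and> odd j"
      then show False using LA_noout[OF x] LD_noout[OF y] adj by auto
    next
      assume "odd i \<and> even j"
      then show False using LA_noin[OF x] LD_noin[OF y] adj by auto
    qed
  qed
  obtain wa where wa: "chainw E wa (Suc (Suc i))" "wa (Suc (Suc i)) = x" using chainA[OF x] by blast
  obtain wd where wd: "chainw (E\<inverse>) wd (Suc (Suc j))" "wd (Suc (Suc j)) = y" using chainD[OF y] by blast
  define L where "L = i + j + 5"
  define W where "W = (\<lambda>p. if p \<le> Suc (Suc i) then wa p else wd (L - p))"
  have Qd: "Q_dir (i + j + 6) p = (p \<le> 1 \<or> (p \<le> i + j + 3 \<and> odd p) \<or> i + j + 3 < p)" for p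
    using par by (auto simp: Q_dir_def)
  have arcs: "if Q_dir (i + j + 6) p then (W p, W (Suc p)) \<in> E else (W (Suc p), W p) \<in> E" if p: "p < L" for p
  proof -
    consider "p < Suc (Suc i)" | "p = Suc (Suc i)" | "Suc (Suc i) < p" by linarith
    then show ?thesis
    proof cases
      case 1
      then have "W p = wa p" "W (Suc p) = wa (Suc p)" unfolding W_def by auto
      moreover have "Q_dir (i + j + 6) p = (p \<le> 1 \<or> odd p)" using 1 Qd by auto
      ultimately show ?thesis using wa(1) 1 unfolding chainw_def by auto
    next
      case 2
      have w1: "W p = x" using 2 wa(2) unfolding W_def by simp
      have "L - Suc p = Suc (Suc j)" using 2 unfolding L_def by simp
      then have w2: "W (Suc p) = y" using 2 wd(2) unfolding W_def by simp
      have "Q_dir (i + j + 6) p = odd i" using 2 Qd by auto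
      moreover have "odd i \<Longrightarrow> (x, y) \<in> E" using LA_noin[OF x] adj by auto
      moreover have "even i \<Longrightarrow> (y, x) \<in> E" using LA_noout[OF x] adj by auto
      ultimately show ?thesis using w1 w2 by auto
    next
      case 3
      define q where "q = L - Suc p"
      have q: "q < Suc (Suc j)" "L - p = Suc q" using 3 p unfolding q_def L_def by auto
      have "W p = wd (Suc q)" "W (Suc p) = wd q" using 3 q unfolding W_def q_def by auto
      moreover have "Q_dir (i + j + 6) p = (q \<le> 1 \<or> odd q)"
      proof -
        have pq: "p = i + j + 4 - q" using q(2) p unfolding L_def by auto
        show ?thesis
        proof (cases "q = 0")
          case True then show ?thesis using Qd pq by auto
        next
          case False
          then have "p \<le> i + j + 3" "2 \<le> p" using pq 3 by auto
          then have Qp: "Q_dir (i + j + 6) p = odd p" using Qd by auto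
          have "p + q = i + j + 4" using pq q(1) \<open>2 \<le> p\<close> \<open>p \<le> i + j + 3\<close> by linarith
          then have "odd p = odd q" using par by presburger
          then show ?thesis using False Qp by auto
        qed
      qed
      ultimately show ?thesis using wd(1) q(1) unfolding chainw_def by auto
    qed
  qed
  have "sw V E W L (Q_dir (i + j + 6))" by (rule sw_from_arcs) (use arcs L_def in auto)
  then show ?thesis using par L_def by blast
qed

end


lemma ac_f: "odd n \<Longrightarrow> even a \<Longrightarrow> Suc a < n \<Longrightarrow> (a, Suc a) \<in> AC_arcs n"
  by (subst AC_arc_iff) auto
lemma ac_b: "odd n \<Longrightarrow> odd b \<Longrightarrow> Suc b < n \<Longrightarrow> (Suc b, b) \<in> AC_arcs n"
  by (subst AC_arc_iff) auto
lemma ac_l: "odd n \<Longrightarrow> (n - 1, 0) \<in> AC_arcs n"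
proof -
  assume o: "odd n"
  then have "0 < n" by (rule odd_pos)
  then show ?thesis using o by (subst AC_arc_iff) auto
qed

locale ognq = og +
  fixes n :: nat and kp :: nat
  assumes nk: "n = 2 * kp + 5" and conn: "connected_digraph V E"
    and NQ: "\<And>l v. even l \<Longrightarrow> 4 \<le> l \<Longrightarrow> l \<le> n + 1 \<Longrightarrow> \<not> sw V E v (l - 1) (Q_dir l)"
    and A0ne: "A0 \<noteq> {}"
begin

abbreviation "mm \<equiv> Suc (Suc kp)"
abbreviation "k0 \<equiv> kp"
abbreviation "R \<equiv> V - LC (Suc k0)"
abbreviation "cond \<equiv> (\<forall>x\<in>LA (Suc k0). \<not> (\<exists>y. (x, y) \<in> E)) \<and> (\<forall>x\<in>LD (Suc k0). \<not> (\<exists>y. (y, x) \<in> E))"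
definition "LastA = (if cond then {x \<in> R. \<not> (\<exists>y. (y, x) \<in> E)} else {x \<in> R. \<not> (\<exists>y. (x, y) \<in> E)})"
definition "LastD = (if cond then {x \<in> R. \<not> (\<exists>y. (x, y) \<in> E)} else {x \<in> R. \<not> (\<exists>y. (y, x) \<in> E)})"

lemma nmm: "n = 2 * mm + 1" "(n - 1) div 2 = mm" "odd n" "5 \<le> n" "(n - Suc 0) div 2 = mm" "mm < n" "Suc mm < n"
  using nk by auto

lemma cc_last_eq: "cc_last V E n = (LastA, LastD)"
proof -
  have "(n - 1) div 2 - 1 = Suc k0" using nmm by simp
  then show ?thesis unfolding cc_last_def LastA_def LastD_def
    by (cases "cc_layers V E (Suc k0)") (simp add: split_beta)
qed

lemma noA0A0: "x \<in> A0 \<Longrightarrow> y \<in> A0 \<Longrightarrow> (x, y) \<notin> E"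
proof
  assume x: "x \<in> A0" and y: "y \<in> A0" and xy: "(x, y) \<in> E"
  obtain u where u: "(u, x) \<in> E" using A0D[OF x] by blast
  obtain w where w: "(y, w) \<in> E" using A0D[OF y] by blast
  define W where "W = (\<lambda>p::nat. if p = 0 then u else if p = 1 then x else if p = 2 then y else w)"
  have "sw V E W 3 (Q_dir 4)"
  proof (rule sw_from_arcs)
    fix p :: nat assume "p < 3"
    then have "p = 0 \<or> p = 1 \<or> p = 2" by auto
    moreover have "Q_dir 4 0" "Q_dir 4 1" "Q_dir 4 2" by (simp_all add: Q_dir_def)
    ultimately show "if Q_dir 4 p then (W p, W (Suc p)) \<in> E else (W (Suc p), W p) \<in> E"
      using u xy w unfolding W_def by (auto simp: eval_nat_numeral)
  qed simp
  moreover have "4 \<le> n + 1" using nk by simp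
  ultimately show False using NQ[of 4 W] by simp
qed

lemma noAD: "x \<in> LA (Suc i) \<Longrightarrow> y \<in> LD (Suc j) \<Longrightarrow> i \<le> k0 \<Longrightarrow> j \<le> k0 \<Longrightarrow> (x, y) \<in> E \<or> (y, x) \<in> E \<Longrightarrow> False"
proof -
  assume a: "x \<in> LA (Suc i)" "y \<in> LD (Suc j)" "i \<le> k0" "j \<le> k0" "(x, y) \<in> E \<or> (y, x) \<in> E"
  from AD_walk[OF a(1,2,5)] obtain W where W: "even (i + j)" "sw V E W (i + j + 5) (Q_dir (i + j + 6))" by blast
  have "i + j + 6 \<le> n + 1" using a(3,4) nk by linarith
  moreover have e: "i + j + 6 - 1 = i + j + 5" by simp
  moreover have "even (i + j + 6)" using W(1) by simp
  ultimately show False using NQ[of "i + j + 6" W, unfolded e] W by auto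
qed

lemma NI: "x \<in> V \<Longrightarrow> \<exists>y. (x, y) \<in> E \<or> (y, x) \<in> E"
proof -
  assume x: "x \<in> V"
  obtain a where "a \<in> A0" using A0ne by blast
  then obtain b where ab: "(a, b) \<in> E" using A0D by blast
  have "a \<in> V" using ab EV by blast
  then have "(x, a) \<in> (E \<union> E\<inverse>)\<^sup>*" using conn x unfolding connected_digraph_def by blast
  then show ?thesis
  proof (cases rule: converse_rtranclE)
    case base then show ?thesis using ab by blast
  next
    case (step c) then show ?thesis by blast
  qed
qed

lemma Conn: "R \<noteq> {} \<Longrightarrow> LA (Suc k0) \<union> LD (Suc k0) \<noteq> {}"
proof -
  assume "R \<noteq> {}"
  then obtain r where r: "r \<in> V" "r \<notin> LC (Suc k0)" by blast
  obtain a where a: "a \<in> A0" using A0ne by blast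
  have aV: "a \<in> V" using a A0V by blast
  have aC: "a \<in> LC (Suc k0)" using a LC_mono[of 0 "Suc k0"] by auto
  have "(r, a) \<in> (E \<union> E\<inverse>)\<^sup>*" using conn r aV unfolding connected_digraph_def by blast
  then show ?thesis using r(2)
  proof (induction rule: converse_rtrancl_induct)
    case base then show ?case using aC by blast
  next
    case (step z z')
    show ?case
    proof (cases "z' \<in> LC (Suc k0)")
      case False then show ?thesis using step.IH by blast
    next
      case True
      have zz: "(z', z) \<in> E \<or> (z, z') \<in> E" using step.hyps(1) by blast
      from LC_cases[OF True] show ?thesis
      proof
        assume z'A: "z' \<in> A0"
        have "z \<in> LC (Suc 0)"
        proof (cases "z \<in> A0")
          case True then show ?thesis by (simp add: layer1)
        next
          case False then show ?thesis using zz bfs0_out[OF z'A] bfs0_in[OF z'A] by (auto simp: layer1)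
        qed
        then have "z \<in> LC (Suc k0)" using LC_mono[of "Suc 0" "Suc k0"] by auto
        then show ?thesis using step.prems by blast
      next
        assume "\<exists>t<Suc k0. z' \<in> LA (Suc t) \<or> z' \<in> LD (Suc t)"
        then obtain t where t: "t < Suc k0" "z' \<in> LA (Suc t) \<or> z' \<in> LD (Suc t)" by blast
        show ?thesis
        proof (cases "t = k0")
          case True then show ?thesis using t by blast
        next
          case False
          have "z \<in> LC (Suc (Suc t))" using bfs[OF t(2)] zz by blast
          moreover have "Suc (Suc t) \<le> Suc k0" using False t(1) by simp
          ultimately have "z \<in> LC (Suc k0)" using LC_mono by blast
          then show ?thesis using step.prems by blast
        qed
      qed
    qed
  qed
qed

lemma cond_even: "even k0 \<Longrightarrow> cond"
  using LA_noout LD_noin by blast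

lemma cond_odd: "odd k0 \<Longrightarrow> R \<noteq> {} \<Longrightarrow> \<not> cond"
proof -
  assume o: "odd k0" and "R \<noteq> {}"
  then obtain z where "z \<in> LA (Suc k0) \<or> z \<in> LD (Suc k0)" using Conn by blast
  then show "\<not> cond" using LA_out[OF _ o] LD_in[OF _ o] by blast
qed

lemma cond_ok: "x \<in> LA (Suc k0) \<or> x \<in> LD (Suc k0) \<Longrightarrow> cond \<longleftrightarrow> even k0"
  using cond_even LA_out LD_in by blast

lemma cls0: "cc_class V E n 0 = A0"
  using nmm by (simp add: cc_class_def cc_A_def)
lemma clsA: "1 \<le> t \<Longrightarrow> t < mm \<Longrightarrow> cc_class V E n t = LA t"
  by (simp add: cc_class_def cc_A_def nmm(2,5))
lemma clsD: "1 \<le> t \<Longrightarrow> t < mm \<Longrightarrow> cc_class V E n (n - t) = LD t"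
proof -
  assume "1 \<le> t" "t < mm"
  moreover have "n - (n - t) = t" "\<not> (n - t \<le> mm)" "n - t < n" using \<open>t < mm\<close> \<open>1 \<le> t\<close> nk by auto
  ultimately show ?thesis by (simp add: cc_class_def cc_D_def nmm(2,5))
qed
lemma clsLA: "cc_class V E n mm = LastA"
  using nmm(6) by (simp add: cc_class_def cc_A_def cc_last_eq nmm(2,5))
lemma clsLD: "cc_class V E n (Suc mm) = LastD"
proof -
  have "n - Suc mm = mm" using nk by simp
  then show ?thesis using nmm(7) by (simp add: cc_class_def cc_D_def cc_last_eq nmm(2,5))
qed

lemma cls_cases: "k < n \<Longrightarrow> k = 0 \<or> (\<exists>t. 1 \<le> t \<and> t < mm \<and> (k = t \<or> k = n - t)) \<or> k = mm \<or> k = Suc mm"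
proof -
  assume k: "k < n"
  show ?thesis
  proof (cases "k \<le> Suc mm")
    case True
    show ?thesis
    proof (cases "k = 0 \<or> k = mm \<or> k = Suc mm")
      case True then show ?thesis by blast
    next
      case False
      then have "1 \<le> k" "k < mm" using \<open>k \<le> Suc mm\<close> by auto
      then show ?thesis by blast
    qed
  next
    case False
    then have "1 \<le> n - k" "n - k < mm" "k = n - (n - k)" using k nmm by auto
    then show ?thesis by blast
  qed
qed

definition lvl :: "nat \<Rightarrow> nat" where "lvl k = (if k \<le> mm then k else n - k)"

definition P :: "'a \<Rightarrow> nat \<Rightarrow> bool" where
  "P x l \<longleftrightarrow> (l = 0 \<and> x \<in> A0) \<or> (1 \<le> l \<and> l < mm \<and> (x \<in> LA l \<or> x \<in> LD l)) \<or> (l = mm \<and> x \<in> R)"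

lemma LA_Suc_pred: "1 \<le> l \<Longrightarrow> LA l = LA (Suc (l - 1))" "1 \<le> l \<Longrightarrow> LD l = LD (Suc (l - 1))"
  by simp_all

lemma P_unique: "P x l1 \<Longrightarrow> P x l2 \<Longrightarrow> l1 = l2"
proof -
  have A0R: "x \<in> A0 \<Longrightarrow> x \<notin> R" using LC_mono[of 0 "Suc k0"] by auto
  have lev: "x \<in> LA (Suc t) \<or> x \<in> LD (Suc t) \<Longrightarrow> x \<in> LA (Suc s) \<or> x \<in> LD (Suc s) \<Longrightarrow> t = s" for t s
    using level_lb[of x t "Suc s"] level_lb[of x s "Suc t"] LAD_LC[of x t] LAD_LC[of x s] by auto
  have levR: "x \<in> LA (Suc t) \<or> x \<in> LD (Suc t) \<Longrightarrow> t \<le> k0 \<Longrightarrow> x \<notin> R" for t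
    using LAD_LC[of x t] LC_mono[of "Suc t" "Suc k0"] by auto
  assume p: "P x l1" "P x l2"
  show ?thesis
  proof (rule ccontr)
    assume ne: "l1 \<noteq> l2"
    have "\<not> (P x l1 \<and> P x l2)" if "l1 < l2" for l1 l2
    proof
      assume q: "P x l1 \<and> P x l2"
      show False
      proof (cases "l1 = 0")
        case True
        then have "x \<in> A0" using q unfolding P_def by auto
        then show False using q that A0R LAD_notA0[of x "l2 - 1"] unfolding P_def by auto
      next
        case False
        then have x1: "x \<in> LA (Suc (l1 - 1)) \<or> x \<in> LD (Suc (l1 - 1))" "l1 < mm"
          using q that unfolding P_def by auto
        show False
        proof (cases "l2 = mm")
          case True then have "x \<in> R" using q unfolding P_def by auto
          moreover have "l1 - 1 \<le> k0" using x1 by auto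
          ultimately show False using levR[OF x1(1)] by blast
        next
          case False
          then have "x \<in> LA (Suc (l2 - 1)) \<or> x \<in> LD (Suc (l2 - 1))" using q that unfolding P_def by auto
          from lev[OF x1(1) this] \<open>l1 \<noteq> 0\<close> that show False by auto
        qed
      qed
    qed
    then show False using p ne by (metis linorder_neqE_nat)
  qed
qed

lemma LAD_disj: "x \<in> LA (Suc t) \<Longrightarrow> x \<in> LD (Suc t) \<Longrightarrow> False"
proof (cases "even t")
  case True
  assume "x \<in> LA (Suc t)" "x \<in> LD (Suc t)"
  then show False using LA_in[OF _ True] LD_noin[OF _ True] by blast
next
  case False
  assume "x \<in> LA (Suc t)" "x \<in> LD (Suc t)"
  then show False using LA_noin[OF _ False] LD_in[OF _ False] by blast
qed

lemma Last_disj: "x \<in> LastA \<Longrightarrow> x \<in> LastD \<Longrightarrow> False"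
proof -
  assume "x \<in> LastA" "x \<in> LastD"
  then have "x \<in> V" "\<not> (\<exists>y. (y, x) \<in> E)" "\<not> (\<exists>y. (x, y) \<in> E)"
    unfolding LastA_def LastD_def by (auto split: if_splits)
  then show False using NI by blast
qed

lemma mem_P: "k < n \<Longrightarrow> x \<in> cc_class V E n k \<Longrightarrow> P x (lvl k)"
proof -
  assume k: "k < n" and x: "x \<in> cc_class V E n k"
  consider "k = 0" | t where "1 \<le> t" "t < mm" "k = t" | t where "1 \<le> t" "t < mm" "k = n - t" | "k = mm" | "k = Suc mm"
    using cls_cases[OF k] by blast
  then show ?thesis
  proof cases
    case 1 then show ?thesis using x cls0 unfolding P_def lvl_def by auto
  next
    case (2 t) then show ?thesis using x clsA unfolding P_def lvl_def by auto
  next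
    case (3 t)
    have "lvl k = t" using 3 nk unfolding lvl_def by auto
    then show ?thesis using x 3 clsD unfolding P_def by auto
  next
    case 4 then show ?thesis using x clsLA unfolding P_def lvl_def LastA_def by (auto split: if_splits)
  next
    case 5
    have "lvl k = mm" using 5 nk unfolding lvl_def by auto
    then show ?thesis using x clsLD 5 unfolding P_def LastD_def by (auto split: if_splits)
  qed
qed

lemma class_unique: "k1 < n \<Longrightarrow> k2 < n \<Longrightarrow> x \<in> cc_class V E n k1 \<Longrightarrow> x \<in> cc_class V E n k2 \<Longrightarrow> k1 = k2"
proof -
  assume a: "k1 < n" "k2 < n" "x \<in> cc_class V E n k1" "x \<in> cc_class V E n k2"
  have l: "lvl k1 = lvl k2" using P_unique[OF mem_P[OF a(1,3)] mem_P[OF a(2,4)]] .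
  show "k1 = k2"
  proof (rule ccontr)
    assume ne: "k1 \<noteq> k2"
    have "\<not> (x \<in> cc_class V E n a \<and> x \<in> cc_class V E n b)" if ab: "a \<le> mm" "mm < b" "b < n" "lvl a = lvl b" for a b
    proof
      assume q: "x \<in> cc_class V E n a \<and> x \<in> cc_class V E n b"
      have ba: "b = n - a" using ab nmm unfolding lvl_def by auto
      show False
      proof (cases "a = mm")
        case True
        then have "b = Suc mm" using ba nmm by simp
        then show False using q True clsLA clsLD Last_disj by auto
      next
        case False
        have "a \<noteq> 0" using ba ab by auto
        then have "1 \<le> a" "a < mm" using False ab by auto
        then have "x \<in> LA a" "x \<in> LD a" using q clsA clsD ba by auto
        then show False using LAD_disj[of x "a - 1"] \<open>1 \<le> a\<close> by simp
      qed
    qed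
    moreover have "k1 \<le> mm \<and> mm < k2 \<or> k2 \<le> mm \<and> mm < k1"
      using ne l a(1,2) unfolding lvl_def by (auto split: if_splits)
    ultimately show False using a l by metis
  qed
qed

lemma class_exists: "x \<in> V \<Longrightarrow> \<exists>k<n. x \<in> cc_class V E n k"
proof -
  assume x: "x \<in> V"
  show ?thesis
  proof (cases "x \<in> LC (Suc k0)")
    case True
    from LC_cases[OF True] show ?thesis
    proof
      assume "x \<in> A0" then show ?thesis using cls0 nmm by (intro exI[of _ 0]) auto
    next
      assume "\<exists>t<Suc k0. x \<in> LA (Suc t) \<or> x \<in> LD (Suc t)"
      then obtain t where t: "t < Suc k0" "x \<in> LA (Suc t) \<or> x \<in> LD (Suc t)" by blast
      have t': "1 \<le> Suc t" "Suc t < mm" using t nmm by auto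
      show ?thesis
      proof (cases "x \<in> LA (Suc t)")
        case True then show ?thesis using clsA[OF t'] t' nmm by (intro exI[of _ "Suc t"]) auto
      next
        case False then have "x \<in> LD (Suc t)" using t by blast
        then show ?thesis using clsD[OF t'] t' nmm by (intro exI[of _ "n - Suc t"]) auto
      qed
    qed
  next
    case False
    have xA: "x \<notin> A0" using False LC_mono[of 0 "Suc k0"] by auto
    obtain y where y: "(x, y) \<in> E \<or> (y, x) \<in> E" using NI[OF x] by blast
    have xR: "x \<in> R" using x False by blast
    have "(\<not> (\<exists>y. (y, x) \<in> E)) \<or> (\<not> (\<exists>y. (x, y) \<in> E))" using notA0[OF xA] by blast
    then have "x \<in> LastA \<or> x \<in> LastD"
      using xR unfolding LastA_def LastD_def by auto
    moreover have "mm < n" "Suc mm < n" using nk by auto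
    ultimately show ?thesis using clsLA clsLD by blast
  qed
qed

lemma map_eq: "k < n \<Longrightarrow> x \<in> cc_class V E n k \<Longrightarrow> cc_map V E n x = k"
  unfolding cc_map_def using class_unique by blast

end


context ognq begin

abbreviation "cls \<equiv> cc_class V E n"

lemma inA: "x \<in> LA (Suc t) \<Longrightarrow> t \<le> k0 \<Longrightarrow> x \<in> cls (Suc t)"
  using clsA[of "Suc t"] by auto
lemma inD: "x \<in> LD (Suc t) \<Longrightarrow> t \<le> k0 \<Longrightarrow> x \<in> cls (n - Suc t)"
  using clsD[of "Suc t"] by auto
lemma inLA: "x \<in> LastA \<Longrightarrow> x \<in> cls mm" using clsLA by simp
lemma inLD: "x \<in> LastD \<Longrightarrow> x \<in> cls (Suc mm)" using clsLD by simp

lemma VLC: "y \<in> V \<Longrightarrow> y \<notin> A0 \<Longrightarrow> (\<exists>t\<le>k0. y \<in> LA (Suc t) \<or> y \<in> LD (Suc t)) \<or> y \<in> R"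
  using LC_cases[of y "Suc k0"] by auto

lemma toR: "x \<in> LA (Suc i) \<or> x \<in> LD (Suc i) \<Longrightarrow> i \<le> k0 \<Longrightarrow> (x, y) \<in> E \<or> (y, x) \<in> E \<Longrightarrow> y \<in> R \<Longrightarrow> i = k0"
proof (rule ccontr)
  assume a: "x \<in> LA (Suc i) \<or> x \<in> LD (Suc i)" "i \<le> k0" "(x, y) \<in> E \<or> (y, x) \<in> E" "y \<in> R" "i \<noteq> k0"
  have "y \<in> LC (Suc (Suc i))" using bfs[OF a(1) a(3)] .
  moreover have "LC (Suc (Suc i)) \<subseteq> LC (Suc k0)" using a(2,5) by (intro LC_mono) simp
  ultimately show False using a(4) by blast
qed

lemma lvl_adj: "x \<in> LA (Suc i) \<or> x \<in> LD (Suc i) \<Longrightarrow> y \<in> LA (Suc t) \<or> y \<in> LD (Suc t) \<Longrightarrow> (x, y) \<in> E \<or> (y, x) \<in> E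
   \<Longrightarrow> t < Suc (Suc i) \<and> i < Suc (Suc t)"
proof -
  assume a: "x \<in> LA (Suc i) \<or> x \<in> LD (Suc i)" "y \<in> LA (Suc t) \<or> y \<in> LD (Suc t)" "(x, y) \<in> E \<or> (y, x) \<in> E"
  have "y \<in> LC (Suc (Suc i))" using bfs[OF a(1) a(3)] .
  moreover have "x \<in> LC (Suc (Suc t))" using bfs[OF a(2)] a(3) by blast
  ultimately show ?thesis using level_lb a(1,2) by blast
qed

definition "GG x y \<longleftrightarrow> (\<exists>kx<n. \<exists>ky<n. x \<in> cls kx \<and> y \<in> cls ky \<and> (kx, ky) \<in> AC_arcs n)"

lemma GGI: "kx < n \<Longrightarrow> ky < n \<Longrightarrow> x \<in> cls kx \<Longrightarrow> y \<in> cls ky \<Longrightarrow> (kx, ky) \<in> AC_arcs n \<Longrightarrow> GG x y"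
  unfolding GG_def by blast

lemma hom_arc: "(x, y) \<in> E \<Longrightarrow> GG x y"
proof -
  assume xy: "(x, y) \<in> E"
  have xV: "x \<in> V" and yV: "y \<in> V" using EV[OF xy] by auto
  have no: "odd n" using nmm by simp
  show ?thesis
  proof (cases "x \<in> A0")
    case True
    have yA: "y \<notin> A0" using noA0A0[OF True] xy by blast
    have "y \<in> LA (Suc 0)" using bfs0_out[OF True xy yA] .
    then have "y \<in> cls 1" using inA[of y 0] by simp
    moreover have "x \<in> cls 0" using True cls0 by simp
    moreover have "(0, 1) \<in> AC_arcs n" using ac_f[OF no, of 0] nk by simp
    ultimately show ?thesis using nk by (intro GGI) auto
  next
    case xA: False
    show ?thesis
    proof (cases "y \<in> A0")
      case True
      have "x \<in> LD (Suc 0)" using bfs0_in[OF True xy xA] .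
      then have "x \<in> cls (n - 1)" using inD[of x 0] by simp
      moreover have "y \<in> cls 0" using True cls0 by simp
      ultimately show ?thesis using nk ac_l[OF no] by (intro GGI) auto
    next
      case yA: False
      have xin: "\<not> (\<exists>u. (u, x) \<in> E)" using notA0[OF xA] xy by blast
      have yout: "\<not> (\<exists>w. (y, w) \<in> E)" using notA0[OF yA] xy by blast
      from VLC[OF xV xA] show ?thesis
      proof (elim disjE exE conjE)
        fix i assume i: "i \<le> k0" "x \<in> LA (Suc i)"
        have io: "odd i" using LA_noout[OF i(2)] xy by blast
        from VLC[OF yV yA] show ?thesis
        proof (elim disjE exE conjE)
          fix t assume t: "t \<le> k0" "y \<in> LA (Suc t)"
          have te: "even t" using LA_noin[OF t(2)] xy by blast
          have "t < Suc (Suc i) \<and> i < Suc (Suc t)" using lvl_adj[of x i y t] i t xy by blast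
          then have "t = Suc i \<or> i = Suc t" using io te by presburger
          then show ?thesis
          proof
            assume ti: "t = Suc i"
            have "(Suc i, Suc (Suc i)) \<in> AC_arcs n" using ac_f[OF no, of "Suc i"] io ti t nk by simp
            then show ?thesis using inA[OF i(2) i(1)] inA[OF t(2) t(1)] ti i t nk by (intro GGI) auto
          next
            assume it: "i = Suc t"
            have "(Suc (Suc t), Suc t) \<in> AC_arcs n" using ac_b[OF no, of "Suc t"] te i it nk by simp
            then show ?thesis using inA[OF i(2) i(1)] inA[OF t(2) t(1)] it i t nk by (intro GGI) auto
          qed
        next
          fix t assume t: "t \<le> k0" "y \<in> LD (Suc t)"
          show ?thesis using noAD[OF i(2) t(2) i(1) t(1)] xy by blast
        next
          assume yR: "y \<in> R"
          have ik: "i = k0" using toR[of x i y] i xy yR by blast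
          have "y \<in> LastA"
          proof -
            have c: "\<not> cond" using i(2) ik io LA_out by blast
            show ?thesis unfolding LastA_def if_not_P[OF c] using yR yout by simp
          qed
          moreover have "(Suc k0, mm) \<in> AC_arcs n" using ac_f[OF no, of "Suc k0"] io ik nk by simp
          ultimately show ?thesis using inA[OF i(2) i(1)] inLA ik nk by (intro GGI) auto
        qed
      next
        fix i assume i: "i \<le> k0" "x \<in> LD (Suc i)"
        have ie: "even i" using LD_noout[OF i(2)] xy by blast
        from VLC[OF yV yA] show ?thesis
        proof (elim disjE exE conjE)
          fix t assume t: "t \<le> k0" "y \<in> LA (Suc t)"
          show ?thesis using noAD[OF t(2) i(2) t(1) i(1)] xy by blast
        next
          fix t assume t: "t \<le> k0" "y \<in> LD (Suc t)"
          have to: "odd t" using LD_noin[OF t(2)] xy by blast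
          have "t < Suc (Suc i) \<and> i < Suc (Suc t)" using lvl_adj[of x i y t] i t xy by blast
          then have "t = Suc i \<or> i = Suc t" using ie to by presburger
          then show ?thesis
          proof
            assume ti: "t = Suc i"
            have e1: "n - Suc i = Suc (n - Suc t)" using ti t nk by simp
            have "odd (n - Suc t)" using ti ie t nk by presburger
            then have "(n - Suc i, n - Suc t) \<in> AC_arcs n" using ac_b[OF no, of "n - Suc t"] e1 t nk by simp
            then show ?thesis using inD[OF i(2) i(1)] inD[OF t(2) t(1)] i t nk by (intro GGI) auto
          next
            assume it: "i = Suc t"
            have e1: "n - Suc t = Suc (n - Suc i)" using it i nk by simp
            have "even (n - Suc i)" using it to i nk by presburger
            then have "(n - Suc i, n - Suc t) \<in> AC_arcs n" using ac_f[OF no, of "n - Suc i"] e1 t nk by simp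
            then show ?thesis using inD[OF i(2) i(1)] inD[OF t(2) t(1)] i t nk by (intro GGI) auto
          qed
        next
          assume yR: "y \<in> R"
          have ik: "i = k0" using toR[of x i y] i xy yR by blast
          have "y \<in> LastD"
          proof -
            have "cond" using ie ik cond_even by simp
            then show ?thesis unfolding LastD_def using yR yout by simp
          qed
          have e1: "n - Suc k0 = Suc (Suc mm)" using nk by simp
          have "odd (Suc mm)" using ie ik by simp
          moreover have "Suc (Suc mm) < n" using nk by simp
          ultimately have "(Suc (Suc mm), Suc mm) \<in> AC_arcs n" using ac_b[OF no, of "Suc mm"] by simp
          then have "(n - Suc k0, Suc mm) \<in> AC_arcs n" using e1 by simp
          then show ?thesis using inD[OF i(2) i(1)] inLD \<open>y \<in> LastD\<close> ik nk by (intro GGI) auto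
        qed
      next
        assume xR: "x \<in> R"
        from VLC[OF yV yA] show ?thesis
        proof (elim disjE exE conjE)
          fix t assume t: "t \<le> k0" "y \<in> LA (Suc t)"
          have tk: "t = k0" using toR[of y t x] t xy xR by blast
          have te: "even t" using LA_noin[OF t(2)] xy by blast
          have "x \<in> LastA"
          proof -
            have "cond" using te tk cond_even by simp
            then show ?thesis unfolding LastA_def using xR xin by simp
          qed
          moreover have "(Suc (Suc k0), Suc k0) \<in> AC_arcs n" using ac_b[OF no, of "Suc k0"] te tk nk by simp
          ultimately show ?thesis using inA[OF t(2) t(1)] inLA tk nk by (intro GGI) auto
        next
          fix t assume t: "t \<le> k0" "y \<in> LD (Suc t)"
          have tk: "t = k0" using toR[of y t x] t xy xR by blast
          have to: "odd t" using LD_noin[OF t(2)] xy by blast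
          have "x \<in> LastD"
          proof -
            have c: "\<not> cond" using t(2) tk to LD_in by blast
            show ?thesis unfolding LastD_def if_not_P[OF c] using xR xin by simp
          qed
          moreover have e1: "n - Suc k0 = Suc (Suc mm)" using nk by simp
          moreover have "even (Suc mm)" using to tk by simp
          moreover have "Suc (Suc mm) < n" using nk by simp
          ultimately have "(Suc mm, n - Suc k0) \<in> AC_arcs n" using ac_f[OF no, of "Suc mm"] by simp
          then show ?thesis using inD[OF t(2) t(1)] inLD \<open>x \<in> LastD\<close> tk nk by (intro GGI) auto
        next
          assume yR: "y \<in> R"
          have Rne: "R \<noteq> {}" using yR by blast
          show ?thesis
          proof (cases "even k0")
            case True
            then have c: "cond" by (rule cond_even)
            have "x \<in> LastA" unfolding LastA_def using c xR xin by simp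
            moreover have "y \<in> LastD" unfolding LastD_def using c yR yout by simp
            moreover have "(mm, Suc mm) \<in> AC_arcs n" using ac_f[OF no, of mm] True nk by simp
            ultimately show ?thesis using inLA inLD nk by (intro GGI) auto
          next
            case False
            then have c: "\<not> cond" using cond_odd Rne by blast
            have "x \<in> LastD" unfolding LastD_def if_not_P[OF c] using xR xin by simp
            moreover have "y \<in> LastA" unfolding LastA_def if_not_P[OF c] using yR yout by simp
            moreover have "(Suc mm, mm) \<in> AC_arcs n" using ac_b[OF no, of mm] False nk by simp
            ultimately show ?thesis using inLA inLD nk by (intro GGI) auto
          qed
        qed
      qed
    qed
  qed
qed

theorem cover_hom:
  "(\<forall>x\<in>V. \<exists>!k. k < n \<and> x \<in> cls k) \<and> hom V E (AC_verts n) (AC_arcs n) (cc_map V E n)"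
proof
  show "\<forall>x\<in>V. \<exists>!k. k < n \<and> x \<in> cls k"
    using class_exists class_unique by blast
  show "hom V E (AC_verts n) (AC_arcs n) (cc_map V E n)"
    unfolding hom_def
  proof (intro conjI ballI)
    fix x assume "x \<in> V"
    then obtain k where "k < n" "x \<in> cls k" using class_exists by blast
    then show "cc_map V E n x \<in> AC_verts n" using map_eq by (simp add: AC_verts_def)
  next
    fix a assume a: "a \<in> E"
    obtain x y where xy: "a = (x, y)" by (cases a)
    from hom_arc a xy obtain kx ky where "kx < n" "ky < n" "x \<in> cls kx" "y \<in> cls ky" "(kx, ky) \<in> AC_arcs n"
      unfolding GG_def by blast
    then show "case a of (x, y) \<Rightarrow> (cc_map V E n x, cc_map V E n y) \<in> AC_arcs n"
      using map_eq xy by simp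
  qed
qed

end


lemma II_iff: "(\<forall>l. even l \<and> 4 \<le> l \<and> l \<le> n + 1 \<longrightarrow> \<not> (\<exists>v. semiwalk_with_pattern V E v (Q_pattern l)))
   \<longleftrightarrow> (\<forall>l v. even l \<longrightarrow> 4 \<le> l \<longrightarrow> l \<le> n + 1 \<longrightarrow> \<not> sw V E v (l - 1) (Q_dir l))"
  by (auto simp: semiwalk_sw)

lemma I_II:
  assumes n: "odd n" "5 \<le> n" and h: "hom V E (AC_verts n) (AC_arcs n) f"
    and l: "even l" "4 \<le> l" "l \<le> n + 1" and s: "sw V E v (l - 1) (Q_dir l)"
  shows False
proof -
  have "\<And>i. i < l - 1 \<Longrightarrow> (if Q_dir l i then ((f \<circ> v) i, (f \<circ> v) (Suc i)) \<in> AC_arcs n else ((f \<circ> v) (Suc i), (f \<circ> v) i) \<in> AC_arcs n)"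
  proof -
    fix i assume i: "i < l - 1"
    have ar: "\<And>a b. (a, b) \<in> E \<Longrightarrow> (f a, f b) \<in> AC_arcs n" using h unfolding hom_def by auto
    show "?thesis i" using s i ar unfolding sw_def by (auto split: if_splits)
  qed
  then show False using AC_no_Q[OF n l] by blast
qed

lemma noA0_hom:
  assumes og: "oriented_graph V E" and n: "odd n" "5 \<le> n" and A0: "cc_A0 V E = {}"
  shows "homomorphic V E (AC_verts n) (AC_arcs n)"
proof -
  define f where "f x = (if \<exists>w. (x, w) \<in> E then (2::nat) else 1)" for x
  have "hom V E (AC_verts n) (AC_arcs n) f" unfolding hom_def
  proof (intro conjI ballI)
    fix x assume "x \<in> V" then show "f x \<in> AC_verts n" using n unfolding f_def AC_verts_def by auto
  next
    fix a assume a: "a \<in> E"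
    obtain x y where xy: "a = (x, y)" by (cases a)
    have yV: "y \<in> V" using og a xy unfolding oriented_graph_def by auto
    have "\<not> (\<exists>w. (y, w) \<in> E)" using A0 a xy yV unfolding cc_A0_def by blast
    then have "f x = 2" "f y = 1" using a xy unfolding f_def by auto
    moreover have "(2, 1) \<in> AC_arcs n"
    proof -
      have "(Suc 1, 1) \<in> AC_arcs n" using ac_b[OF n(1), of 1] n by simp
      then show ?thesis by (metis Suc_1)
    qed
    ultimately show "case a of (x, y) \<Rightarrow> (f x, f y) \<in> AC_arcs n" using xy by simp
  qed
  then show ?thesis unfolding homomorphic_def by blast
qed

theorem mainTheorem7:
  fixes V :: "'a set" and E :: "('a \<times> 'a) set" and n :: nat
  assumes "odd n" and "5 \<le> n"
    and "finite V" and "oriented_graph V E" and "connected_digraph V E"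
  shows "(homomorphic V E (AC_verts n) (AC_arcs n)
            \<longleftrightarrow> (\<forall>l. even l \<and> 4 \<le> l \<and> l \<le> n + 1 \<longrightarrow>
                    \<not> (\<exists>v. semiwalk_with_pattern V E v (Q_pattern l))))
       \<and> ((\<forall>l. even l \<and> 4 \<le> l \<and> l \<le> n + 1 \<longrightarrow>
                    \<not> (\<exists>v. semiwalk_with_pattern V E v (Q_pattern l)))
            \<longleftrightarrow> \<not> homomorphic (Q_verts (n + 1)) (Q_arcs (n + 1)) V E)
       \<and> ((\<exists>x\<in>V. (\<exists>u. (u, x) \<in> E) \<and> (\<exists>w. (x, w) \<in> E)) \<longrightarrow>
            (homomorphic V E (AC_verts n) (AC_arcs n)
             \<longleftrightarrow> (\<forall>x\<in>V. \<exists>!k. k < n \<and> x \<in> cc_class V E n k)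
                 \<and> hom V E (AC_verts n) (AC_arcs n) (cc_map V E n)))"
proof -
  note n = assms(1,2)
  let ?II = "\<forall>l v. even l \<longrightarrow> 4 \<le> l \<longrightarrow> l \<le> n + 1 \<longrightarrow> \<not> sw V E v (l - 1) (Q_dir l)"
  have nk: "n = 2 * ((n - 5) div 2) + 5" using n by (auto elim!: oddE)
  have cover: "(\<forall>x\<in>V. \<exists>!k. k < n \<and> x \<in> cc_class V E n k) \<and> hom V E (AC_verts n) (AC_arcs n) (cc_map V E n)"
    if II: ?II and A0: "cc_A0 V E \<noteq> {}"
  proof -
    interpret ognq V E n "(n - 5) div 2"
      using assms(4,5) nk II A0 by unfold_locales auto
    show ?thesis using cover_hom by simp
  qed
  have I_to_II: "?II" if "homomorphic V E (AC_verts n) (AC_arcs n)"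
    using that I_II[OF n] unfolding homomorphic_def by blast
  have II_to_I: "homomorphic V E (AC_verts n) (AC_arcs n)" if II: ?II
  proof (cases "cc_A0 V E = {}")
    case True then show ?thesis using noA0_hom assms(4) n by blast
  next
    case False then show ?thesis using cover[OF II] unfolding homomorphic_def by blast
  qed
  have II_Q: "?II \<longleftrightarrow> \<not> homomorphic (Q_verts (n + 1)) (Q_arcs (n + 1)) V E"
  proof
    assume II: ?II
    show "\<not> homomorphic (Q_verts (n + 1)) (Q_arcs (n + 1)) V E"
    proof
      assume "homomorphic (Q_verts (n + 1)) (Q_arcs (n + 1)) V E"
      then obtain g where hg: "hom (Q_verts (n + 1)) (Q_arcs (n + 1)) V E g" unfolding homomorphic_def by blast
      have "sw V E g (n + 1 - 1) (Q_dir (n + 1))" by (rule iffD1[OF hom_Q_sw hg]) simp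
      moreover have "even (n + 1)" "4 \<le> n + 1" using n by auto
      ultimately show False using II by blast
    qed
  next
    assume nh: "\<not> homomorphic (Q_verts (n + 1)) (Q_arcs (n + 1)) V E"
    show ?II
    proof (intro allI impI notI)
      fix l v assume l: "even l" "4 \<le> l" "l \<le> n + 1" and s: "sw V E v (l - 1) (Q_dir l)"
      define t where "t = (n + 1 - l) div 2"
      have lt: "l + 2 * t = n + 1" using l n unfolding t_def by (auto elim!: evenE oddE)
      obtain w where "sw V E w (l + 2 * t - 1) (Q_dir (l + 2 * t))" using pad_many[OF s l(2)] by blast
      then have "sw V E w (n + 1 - 1) (Q_dir (n + 1))" using lt by simp
      moreover have "1 \<le> n + 1" by simp
      ultimately have "hom (Q_verts (n + 1)) (Q_arcs (n + 1)) V E w" using hom_Q_sw by blast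
      then show False using nh unfolding homomorphic_def by blast
    qed
  qed
  show ?thesis
  proof (intro conjI)
    show "homomorphic V E (AC_verts n) (AC_arcs n) \<longleftrightarrow> (\<forall>l. even l \<and> 4 \<le> l \<and> l \<le> n + 1 \<longrightarrow> \<not> (\<exists>v. semiwalk_with_pattern V E v (Q_pattern l)))"
      unfolding II_iff using I_to_II II_to_I by blast
    show "(\<forall>l. even l \<and> 4 \<le> l \<and> l \<le> n + 1 \<longrightarrow> \<not> (\<exists>v. semiwalk_with_pattern V E v (Q_pattern l))) \<longleftrightarrow> \<not> homomorphic (Q_verts (n + 1)) (Q_arcs (n + 1)) V E"
      unfolding II_iff using II_Q .
    show "(\<exists>x\<in>V. (\<exists>u. (u, x) \<in> E) \<and> (\<exists>w. (x, w) \<in> E)) \<longrightarrow>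
      (homomorphic V E (AC_verts n) (AC_arcs n) \<longleftrightarrow> (\<forall>x\<in>V. \<exists>!k. k < n \<and> x \<in> cc_class V E n k) \<and> hom V E (AC_verts n) (AC_arcs n) (cc_map V E n))"
    proof
      assume "\<exists>x\<in>V. (\<exists>u. (u, x) \<in> E) \<and> (\<exists>w. (x, w) \<in> E)"
      then have A0: "cc_A0 V E \<noteq> {}" unfolding cc_A0_def by blast
      show "homomorphic V E (AC_verts n) (AC_arcs n) \<longleftrightarrow> (\<forall>x\<in>V. \<exists>!k. k < n \<and> x \<in> cc_class V E n k) \<and> hom V E (AC_verts n) (AC_arcs n) (cc_map V E n)"
        using cover[OF I_to_II A0] unfolding homomorphic_def by blast
    qed
  qed
qed



end
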